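(* In the meta-algorithm described in the context (with an arbitrary commitment subroutine), every honest search step $q$ whose current node $I^q$ is not a leaf satisfies $\Phi_{q+1}=\Phi_q-1$.
   Context: Robust dynamic pricing: there are $T$ rounds and an unknown valuation $v^\star\in[0,1)$. At each round $t$ the seller posts $p_t\in[0,1]$; the true sale indicator is $y_t=\mathbbm 1\{p_t\le v^\star\}$, the seller observes $\sigma_t\in\{0,1\}$, and round $t$ is corrupted if $\sigma_t\neq y_t$. Meta-algorithm: let $D=\lceil\log_2 T\rceil$. Consider the complete binary tree of intervals of depth $D$ with root $[0,1)$, where each non-leaf node $[L,R)$ has children $[L,M)$ and $[M,R)$, $M=(L+R)/2$; the depth-$D$ nodes are the leaves, and $\ell^\star$ is the unique leaf containing $v^\star$. The algorithm keeps a current node $I$, initially the root. If $I=[L,R)$ is not a leaf, it performs a safety check — post $L$ and observe $\sigma_L$, post $R$ and observe $\sigma_R$; the check fails if $\sigma_L=0$ or $\sigma_R=1$ (by convention the query at $L=0$ and the query at $R=1$ always count as passing). On failure $I$ becomes its parent; otherwise it posts $M$, observes $\sigma_M$, and $I$ becomes $[M,R)$ if $\sigma_M=1$ and $[L,M)$ if $\sigma_M=0$. If $I$ is a leaf, a commitment subroutine is run on $I$; it posts prices on consecutive rounds and may return FAIL, in which case $I$ becomes its parent. Search steps: each iteration at a non-leaf node (safety check plus possible midpoint query) is one search step; each call of the commitment subroutine at a leaf is one search step. A search step is honest if none of its rounds is corrupted, and corrupted otherwise. $I^q$ is the current node at the start of search step $q$, and $\Phi_q=\mathrm{dist}(I^q,\ell^\star)$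 is the length of the shortest path between $I^q$ and $\ell^\star$ in the tree. *)

theory Defs
  imports Complex_Main
begin

text \<open>Nodes of the complete binary tree of depth D are pairs (d, k) with d \<le> D and
  k < 2^d; node (d, k) is the interval [k / 2^d, (k+1) / 2^d).\<close>

type_synonym node = "nat \<times> nat"

definition depth_D :: "nat \<Rightarrow> nat" where
  "depth_D T = nat \<lceil>log 2 (real T)\<rceil>"

definition is_node :: "nat \<Rightarrow> node \<Rightarrow> bool" where
  "is_node D u \<longleftrightarrow> fst u \<le> D \<and> snd u < 2 ^ fst u"

definition lo :: "node \<Rightarrow> real" where
  "lo u = real (snd u) / 2 ^ fst u"

definition hi :: "node \<Rightarrow> real" where
  "hi u = real (Suc (snd u)) / 2 ^ fst u"

definition mid :: "node \<Rightarrow> real" where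
  "mid u = (lo u + hi u) / 2"

definition is_leaf :: "nat \<Rightarrow> node \<Rightarrow> bool" where
  "is_leaf D u \<longleftrightarrow> fst u = D"

definition parent :: "node \<Rightarrow> node" where
  "parent u = (fst u - 1, snd u div 2)"

definition left_child :: "node \<Rightarrow> node" where
  "left_child u = (Suc (fst u), 2 * snd u)"

definition right_child :: "node \<Rightarrow> node" where
  "right_child u = (Suc (fst u), 2 * snd u + 1)"

definition tree_adj :: "nat \<Rightarrow> node \<Rightarrow> node \<Rightarrow> bool" where
  "tree_adj D u v \<longleftrightarrow> is_node D u \<and> is_node D v \<and>
     ((0 < fst u \<and> v = parent u) \<or> (0 < fst v \<and> u = parent v))"

definition is_path :: "nat \<Rightarrow> node list \<Rightarrow> bool" where
  "is_path D ps \<longleftrightarrow> ps \<noteq> [] \<and> (\<forall>i. Suc i < length ps \<longrightarrow> tree_adj D (ps ! i) (ps ! Suc i))"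

definition tree_dist :: "nat \<Rightarrow> node \<Rightarrow> node \<Rightarrow> nat" where
  "tree_dist D u v = (LEAST n. \<exists>ps. is_path D ps \<and> length ps = Suc n \<and> hd ps = u \<and> last ps = v)"

definition leaf_of :: "nat \<Rightarrow> real \<Rightarrow> node" where
  "leaf_of D v = (D, nat \<lfloor>v * 2 ^ D\<rfloor>)"

definition sale :: "real \<Rightarrow> real \<Rightarrow> bool" where
  "sale vstar p \<longleftrightarrow> p \<le> vstar"

definition check_fails :: "node \<Rightarrow> bool \<Rightarrow> bool \<Rightarrow> bool" where
  "check_fails u sL sR \<longleftrightarrow> (lo u \<noteq> 0 \<and> \<not> sL) \<or> (hi u \<noteq> 1 \<and> sR)"

definition search_step :: "node \<Rightarrow> bool \<Rightarrow> bool \<Rightarrow> bool \<Rightarrow> node" where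
  "search_step u sL sR sM =
     (if check_fails u sL sR then parent u
      else if sM then right_child u else left_child u)"

text \<open>A non-leaf search step is honest if none of its posted rounds is corrupted:
  the observations at lo and hi are correct, and, if the midpoint is posted
  (check passes), the observation at mid is correct.\<close>
definition honest_nonleaf_step :: "real \<Rightarrow> node \<Rightarrow> bool \<Rightarrow> bool \<Rightarrow> bool \<Rightarrow> bool" where
  "honest_nonleaf_step vstar u sL sR sM \<longleftrightarrow>
     sL = sale vstar (lo u) \<and> sR = sale vstar (hi u) \<and>
     (\<not> check_fails u sL sR \<longrightarrow> sM = sale vstar (mid u))"

end

theory Submission
  imports Defs
begin

lemma is_path_single[simp]: "is_path D [x]"
  by (simp add: is_path_def)

lemma is_path_Cons2[simp]: "is_path D (x # y # ps) \<longleftrightarrow> tree_adj D x y \<and> is_path D (y # ps)"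
  unfolding is_path_def
proof safe
  assume "\<forall>i. Suc i < length (x # y # ps) \<longrightarrow> tree_adj D ((x # y # ps) ! i) ((x # y # ps) ! Suc i)"
  then show "tree_adj D x y" by (metis length_Cons nth_Cons_0 nth_Cons_Suc zero_less_Suc Suc_less_eq)
next
  fix i assume "\<forall>i. Suc i < length (x # y # ps) \<longrightarrow> tree_adj D ((x # y # ps) ! i) ((x # y # ps) ! Suc i)"
    "Suc i < length (y # ps)"
  then show "tree_adj D ((y # ps) ! i) ((y # ps) ! Suc i)"
    by (metis length_Cons nth_Cons_Suc Suc_less_eq)
next
  fix i assume a: "tree_adj D x y" "\<forall>i. Suc i < length (y # ps) \<longrightarrow> tree_adj D ((y # ps) ! i) ((y # ps) ! Suc i)"
    "Suc i < length (x # y # ps)"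
  then show "tree_adj D ((x # y # ps) ! i) ((x # y # ps) ! Suc i)"
    by (cases i) auto
qed

lemma is_path_Cons_ne: "ps \<noteq> [] \<Longrightarrow> is_path D (x # ps) \<longleftrightarrow> tree_adj D x (hd ps) \<and> is_path D ps"
  by (cases ps) auto

lemma is_path_append:
  "is_path D xs \<Longrightarrow> is_path D ys \<Longrightarrow> last xs = hd ys \<Longrightarrow> is_path D (xs @ tl ys)"
proof (induction xs)
  case Nil then show ?case by (simp add: is_path_def)
next
  case (Cons x xs)
  show ?case
  proof (cases "xs = []")
    case True
    then show ?thesis using Cons by (cases ys) auto
  next
    case False
    then have "is_path D xs" "tree_adj D x (hd xs)" using Cons.prems is_path_Cons_ne by auto
    then have "is_path D (xs @ tl ys)" using Cons False by simp
    then show ?thesis using False \<open>tree_adj D x (hd xs)\<close> by (simp add: is_path_Cons_ne)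
  qed
qed

lemma tree_adj_sym: "tree_adj D x y \<Longrightarrow> tree_adj D y x"
  by (auto simp: tree_adj_def)

lemma is_path_rev: "is_path D ps \<Longrightarrow> is_path D (rev ps)"
proof (induction ps)
  case Nil then show ?case by (simp add: is_path_def)
next
  case (Cons x xs)
  show ?case
  proof (cases "xs = []")
    case True then show ?thesis by simp
  next
    case False
    then have "is_path D xs" "tree_adj D x (hd xs)" using Cons.prems is_path_Cons_ne by auto
    then have r: "is_path D (rev xs)" using Cons by simp
    have "is_path D [hd xs, x]" using \<open>tree_adj D x (hd xs)\<close> tree_adj_sym by simp
    from is_path_append[OF r this] False show ?thesis by (simp add: last_rev)
  qed
qed

lemma is_path_drop: "is_path D ps \<Longrightarrow> i < length ps \<Longrightarrow> is_path D (drop i ps)"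
  unfolding is_path_def by auto

lemma dist_le: "is_path D ps \<Longrightarrow> hd ps = u \<Longrightarrow> last ps = w \<Longrightarrow> tree_dist D u w \<le> length ps - 1"
  unfolding tree_dist_def
  by (rule Least_le) (metis Suc_diff_1 is_path_def length_greater_0_conv)

lemma dist_attained:
  assumes "is_path D ps" "hd ps = u" "last ps = w"
  shows "\<exists>qs. is_path D qs \<and> length qs = Suc (tree_dist D u w) \<and> hd qs = u \<and> last qs = w"
  unfolding tree_dist_def
  apply (rule LeastI_ex)
  using assms by (metis Suc_diff_1 is_path_def length_greater_0_conv)

lemma cut:
  assumes "is_path D ps" "hd ps \<notin> S" "last ps \<in> S"
    and "\<And>x y. tree_adj D x y \<Longrightarrow> x \<notin> S \<Longrightarrow> y \<in> S \<Longrightarrow> y = b"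
  shows "\<exists>i. 0 < i \<and> i < length ps \<and> ps ! i = b"
  using assms(1-3)
proof (induction ps)
  case Nil then show ?case by (simp add: is_path_def)
next
  case (Cons x xs)
  show ?case
  proof (cases "xs = []")
    case True then show ?thesis using Cons by simp
  next
    case False
    then have p: "is_path D xs" "tree_adj D x (hd xs)" using Cons.prems is_path_Cons_ne by auto
    show ?thesis
    proof (cases "hd xs \<in> S")
      case True
      then have "hd xs = b" using assms(4)[OF p(2)] Cons.prems by simp
      then show ?thesis using False by (intro exI[of _ 1]) (auto simp: hd_conv_nth)
    next
      case nS: False
      then obtain i where "0 < i" "i < length xs" "xs ! i = b" using Cons.IH p False Cons.prems by auto
      then show ?thesis by (intro exI[of _ "Suc i"]) auto
    qed
  qed
qed

lemma dist_step:
  assumes ex: "is_path D ps" "hd ps = u" "last ps = w"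
    and adj: "tree_adj D u b" and uS: "u \<notin> S" and wS: "w \<in> S"
    and c: "\<And>x y. tree_adj D x y \<Longrightarrow> x \<notin> S \<Longrightarrow> y \<in> S \<Longrightarrow> y = b"
  shows "tree_dist D b w = tree_dist D u w - 1"
proof -
  obtain qs where qs: "is_path D qs" "length qs = Suc (tree_dist D u w)" "hd qs = u" "last qs = w"
    using dist_attained[OF ex] by blast
  have "\<exists>i. 0 < i \<and> i < length qs \<and> qs ! i = b"
    by (rule cut[OF qs(1)]) (use qs uS wS c in auto)
  then obtain i where i: "0 < i" "i < length qs" "qs ! i = b" by blast
  have pd: "is_path D (drop i qs)" using is_path_drop qs i by auto
  have hd: "hd (drop i qs) = b" using i by (simp add: hd_drop_conv_nth)
  have ld: "last (drop i qs) = w" using i qs by simp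
  have 1: "tree_dist D b w \<le> tree_dist D u w - 1"
    using dist_le[OF pd hd ld] i qs by simp
  obtain rs where rs: "is_path D rs" "length rs = Suc (tree_dist D b w)" "hd rs = b" "last rs = w"
    using dist_attained[OF pd hd ld] by blast
  have "is_path D (u # rs)" using rs adj
    by (metis is_path_Cons_ne is_path_def)
  then have "tree_dist D u w \<le> Suc (tree_dist D b w)"
    using dist_le[of D "u # rs" u w] rs by (auto simp: is_path_def)
  with 1 show ?thesis by linarith
qed

definition desc :: "node \<Rightarrow> node \<Rightarrow> bool" where
  "desc u x \<longleftrightarrow> fst u \<le> fst x \<and> snd x div 2 ^ (fst x - fst u) = snd u"

lemma desc_refl: "desc u u" by (simp add: desc_def)

lemma desc_parent:
  assumes "desc u x" "x \<noteq> u" shows "desc u (parent x)"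
proof -
  obtain d k where x: "x = (d, k)" by force
  obtain e j where u: "u = (e, j)" by force
  have "e \<le> d" "k div 2 ^ (d - e) = j" using assms(1) by (auto simp: desc_def x u)
  moreover have "d \<noteq> e" using assms calculation by (auto simp: x u)
  ultimately have "e < d" by simp
  then obtain m where m: "d - e = Suc m" "d - 1 - e = m" by (metis Suc_diff_Suc diff_Suc_1 diff_commute)
  have "k div 2 div 2 ^ m = k div 2 ^ Suc m" by (simp add: div_mult2_eq)
  then show ?thesis using \<open>e < d\<close> \<open>k div 2 ^ (d - e) = j\<close> m by (auto simp: desc_def parent_def x u)
qed

lemma desc_of_parent:
  assumes "desc u (parent y)" "0 < fst y" shows "desc u y"
proof -
  obtain d k where y: "y = (d, k)" by force
  obtain e j where u: "u = (e, j)" by force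
  have "e \<le> d - 1" "k div 2 div 2 ^ (d - 1 - e) = j" "0 < d"
    using assms by (auto simp: desc_def parent_def y u)
  moreover have "k div 2 div 2 ^ (d - 1 - e) = k div 2 ^ (d - e)"
    using calculation by (metis Suc_diff_Suc Suc_pred div_mult2_eq diff_Suc_1 diff_commute le_imp_less_Suc power_Suc mult.commute)
  ultimately show ?thesis by (auto simp: desc_def y u)
qed

lemma desc_same_depth: "desc u x \<Longrightarrow> fst x = fst u \<Longrightarrow> x = u"
  by (auto simp: desc_def prod_eq_iff)

lemma leaf_node:
  assumes "0 \<le> v" "v < 1" shows "is_node D (leaf_of D v)"
proof -
  have "v * 2 ^ D < 2 ^ D" using assms by simp
  then have "\<lfloor>v * 2 ^ D\<rfloor> < 2 ^ D" by (metis floor_less_iff of_int_numeral of_int_power)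
  then show ?thesis using assms by (auto simp: is_node_def leaf_of_def nat_less_iff)
qed

lemma desc_leaf_iff:
  assumes "0 \<le> v" "v < 1" "fst u \<le> D"
  shows "desc u (leaf_of D v) \<longleftrightarrow> lo u \<le> v \<and> v < hi u"
proof -
  obtain e j where u: "u = (e, j)" by force
  define m where "m = nat \<lfloor>v * 2 ^ D\<rfloor>"
  define n where "n = (2::nat) ^ (D - e)"
  have n0: "n > 0" by (simp add: n_def)
  have Dn: "(2::real) ^ D = real n * 2 ^ e" using assms(3) u
    by (simp add: n_def flip: power_add)
  have mm: "real m = \<lfloor>v * 2 ^ D\<rfloor>" using assms by (simp add: m_def)
  have "m div n = j \<longleftrightarrow> j * n \<le> m \<and> m < Suc j * n"
    using n0 by (meson div_less_iff_less_mult div_times_less_eq_dividend le_less_Suc_eq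
    less_eq_div_iff_mult_less_eq)
  also have "j * n \<le> m \<longleftrightarrow> real j * real n \<le> v * 2 ^ D"
  proof -
    have "j * n \<le> m \<longleftrightarrow> int (j * n) \<le> \<lfloor>v * 2 ^ D\<rfloor>" using assms by (simp add: m_def le_nat_iff)
    also have "\<dots> \<longleftrightarrow> real (j * n) \<le> v * 2 ^ D" by (metis le_floor_iff of_int_of_nat_eq)
    finally show ?thesis by simp
  qed
  also have "m < Suc j * n \<longleftrightarrow> v * 2 ^ D < real (Suc j) * real n"
  proof -
    have "m < Suc j * n \<longleftrightarrow> \<lfloor>v * 2 ^ D\<rfloor> < int (Suc j * n)" using assms by (simp add: m_def nat_less_iff)
    also have "\<dots> \<longleftrightarrow> v * 2 ^ D < real (Suc j * n)" by (metis floor_less_iff of_int_of_nat_eq)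
    finally show ?thesis by (simp only: of_nat_mult)
  qed
  also have "real j * real n \<le> v * 2 ^ D \<longleftrightarrow> lo u \<le> v"
    unfolding Dn lo_def u using n0 by (simp add: field_simps)
  also have "v * 2 ^ D < real (Suc j) * real n \<longleftrightarrow> v < hi u"
    unfolding Dn hi_def u using n0 by (simp add: field_simps del: of_nat_Suc)
  finally show ?thesis using assms by (simp add: desc_def leaf_of_def u m_def n_def)
qed

lemma half_bound: "0 < (e::nat) \<Longrightarrow> k < 2 ^ e \<Longrightarrow> k div 2 < (2::nat) ^ (e - Suc 0)"
proof -
  assume "0 < e" "k < 2 ^ e"
  then obtain m where "e = Suc m" by (cases e) auto
  then show ?thesis using \<open>k < 2 ^ e\<close> by (simp add: div_less_iff_less_mult mult.commute)
qed

lemma path_to_root: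
  "is_node D x \<Longrightarrow> \<exists>ps. is_path D ps \<and> hd ps = x \<and> last ps = (0, 0)"
proof (induction "fst x" arbitrary: x)
  case 0
  then have "x = (0, 0)" by (auto simp: is_node_def prod_eq_iff)
  then show ?case by (intro exI[of _ "[x]"]) simp
next
  case (Suc d)
  have pn: "is_node D (parent x)" using Suc.prems Suc.hyps(2)
    by (auto simp: is_node_def parent_def intro: half_bound)
  have "fst (parent x) = d" using Suc.hyps(2) by (simp add: parent_def)
  then obtain ps where ps: "is_path D ps" "hd ps = parent x" "last ps = (0, 0)"
    using Suc.hyps(1) pn by metis
  have adj: "tree_adj D x (parent x)" using Suc pn by (simp add: tree_adj_def)
  have "ps \<noteq> []" using ps by (simp add: is_path_def)
  then show ?case using ps adj by (intro exI[of _ "x # ps"]) (simp add: is_path_Cons_ne)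
qed

lemma last_append_tl: "xs \<noteq> [] \<Longrightarrow> ys \<noteq> [] \<Longrightarrow> last xs = hd ys \<Longrightarrow> last (xs @ tl ys) = last ys"
  by (cases ys) auto

lemma connected:
  assumes "is_node D x" "is_node D y"
  shows "\<exists>ps. is_path D ps \<and> hd ps = x \<and> last ps = y"
proof -
  obtain ps where ps: "is_path D ps" "hd ps = x" "last ps = (0, 0)" using path_to_root assms(1) by blast
  obtain qs where qs: "is_path D qs" "hd qs = y" "last qs = (0, 0)" using path_to_root assms(2) by blast
  have ne: "ps \<noteq> []" "qs \<noteq> []" using ps qs by (auto simp: is_path_def)
  have r: "is_path D (rev qs)" using is_path_rev qs by blast
  have "last ps = hd (rev qs)" using ne ps qs by (simp add: hd_rev)
  then show ?thesis using is_path_append[OF ps(1) r] ne ps qs last_append_tl[of ps "rev qs"]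
    by (intro exI[of _ "ps @ tl (rev qs)"]) (simp add: last_rev)
qed

theorem lemma3p1:
  fixes T :: nat and vstar :: real
    and I :: "nat \<Rightarrow> node" and sL sR sM :: "nat \<Rightarrow> bool" and q :: nat
  defines "D \<equiv> depth_D T"
  assumes "0 \<le> vstar" and "vstar < 1"
    and "is_node D (I q)" and "\<not> is_leaf D (I q)"
    and "I (Suc q) = search_step (I q) (sL q) (sR q) (sM q)"
    and "honest_nonleaf_step vstar (I q) (sL q) (sR q) (sM q)"
  shows "tree_dist D (I (Suc q)) (leaf_of D vstar) = tree_dist D (I q) (leaf_of D vstar) - 1"
proof -
  define u where "u = I q"
  define l where "l = leaf_of D vstar"
  have un: "is_node D u" and ul: "fst u < D" using assms(4,5) by (auto simp: u_def is_node_def is_leaf_def)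
  have ln: "is_node D l" using leaf_node assms(2,3) by (simp add: l_def)
  obtain ps where ps: "is_path D ps" "hd ps = u" "last ps = l" using connected[OF un ln] by blast
  have sL: "sL q = (lo u \<le> vstar)" and sR: "sR q = (hi u \<le> vstar)"
    using assms(7) by (auto simp: honest_nonleaf_step_def sale_def u_def)
  show ?thesis
  proof (cases "check_fails u (sL q) (sR q)")
    case True
    then have nxt: "I (Suc q) = parent u" using assms(6) by (simp add: search_step_def u_def)
    have out: "\<not> (lo u \<le> vstar \<and> vstar < hi u)" using True sL sR by (auto simp: check_fails_def)
    then have nd: "\<not> desc u l" using desc_leaf_iff assms(2,3) ul by (simp add: l_def)
    have pos: "0 < fst u"
    proof (rule ccontr)
      assume "\<not> 0 < fst u"
      then have "u = (0, 0)" using un by (auto simp: is_node_def prod_eq_iff)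
      then show False using out assms(2,3) by (simp add: lo_def hi_def)
    qed
    have pn: "is_node D (parent u)" using un pos
      by (auto simp: is_node_def parent_def intro: half_bound)
    have adj: "tree_adj D u (parent u)" using un pn pos by (simp add: tree_adj_def)
    have "tree_dist D (parent u) l = tree_dist D u l - 1"
    proof (rule dist_step[OF ps adj, where S = "{x. \<not> desc u x}"])
      show "u \<notin> {x. \<not> desc u x}" by (simp add: desc_refl)
      show "l \<in> {x. \<not> desc u x}" using nd by simp
      fix x y assume a: "tree_adj D x y" "x \<notin> {x. \<not> desc u x}" "y \<in> {x. \<not> desc u x}"
      then have dx: "desc u x" and ndy: "\<not> desc u y" by auto
      from a(1) consider "0 < fst x" "y = parent x" | "0 < fst y" "x = parent y" by (auto simp: tree_adj_def)
      then show "y = parent u"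
      proof cases
        case 1 then show ?thesis using dx ndy desc_parent by metis
      next
        case 2 then show ?thesis using dx ndy desc_of_parent by metis
      qed
    qed
    then show ?thesis using nxt by (simp add: u_def l_def)
  next
    case False
    have inn: "lo u \<le> vstar \<and> vstar < hi u" using False sL sR assms(2,3)
      by (auto simp: check_fails_def)
    define c where "c = (if sM q then right_child u else left_child u)"
    have nxt: "I (Suc q) = c" using assms(6) False by (simp add: search_step_def u_def c_def)
    have sM: "sM q = (mid u \<le> vstar)" using assms(7) False by (auto simp: honest_nonleaf_step_def sale_def u_def)
    obtain d k where udk: "u = (d, k)" by force
    have cn: "is_node D c" using un ul by (auto simp: c_def is_node_def udk left_child_def right_child_def)
    have pc: "parent c = u" "0 < fst c" by (auto simp: c_def udk parent_def left_child_def right_child_def)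
    have lohi: "lo c \<le> vstar \<and> vstar < hi c"
    proof (cases "sM q")
      case True
      have "lo c = mid u" "hi c = hi u" using True
        by (auto simp: c_def udk lo_def hi_def mid_def right_child_def field_simps)
      then show ?thesis using True sM inn by simp
    next
      case False
      have "lo c = lo u" "hi c = mid u" using False
        by (auto simp: c_def udk lo_def hi_def mid_def left_child_def field_simps)
      then show ?thesis using False sM inn by simp
    qed
    have dl: "desc c l" using desc_leaf_iff[of vstar c D] assms(2,3) cn lohi
      by (simp add: l_def is_node_def)
    have adj: "tree_adj D u c" using un cn pc by (simp add: tree_adj_def)
    have "tree_dist D c l = tree_dist D u l - 1"
    proof (rule dist_step[OF ps adj, where S = "{x. desc c x}"])
      show "u \<notin> {x. desc c x}" using pc by (auto simp: desc_def parent_def)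
      show "l \<in> {x. desc c x}" using dl by simp
      fix x y assume a: "tree_adj D x y" "x \<notin> {x. desc c x}" "y \<in> {x. desc c x}"
      then have ndx: "\<not> desc c x" and dy: "desc c y" by auto
      from a(1) consider "0 < fst x" "y = parent x" | "0 < fst y" "x = parent y" by (auto simp: tree_adj_def)
      then show "y = c"
      proof cases
        case 1 then show ?thesis using ndx dy desc_of_parent by metis
      next
        case 2 then show ?thesis using ndx dy desc_parent by metis
      qed
    qed
    then show ?thesis using nxt by (simp add: u_def l_def)
  qed
qed

end
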